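(* (Hyperdense coding with local continuous reversibility but without tomographic locality.) Let $N\ge2$, $n=2^N-1$, $m\ge1$. Let $\Omega_A=\Omega_B=\Omega^{(n)}_m$ with local effect set $\mathcal E_{\mathrm{loc}}$, local transformations $\mathcal T=\{T^{(R)}_\mu\}$, entangled states $\Phi_\mu$, joint state space $\Omega_{AB}$ and effects $F_y$ as in the context. Then: (a) $\Lambda:=\{T\Phi_{\mathbf 0}T'^{\mathrm t}:T,T'\in\mathcal T\}=\{\Phi_\mu\}_{\mu\in\{0,1\}^N}$, and $\Omega_A\otimes_{\min}\Omega_B\subseteq\Omega_{AB}\subseteq\Omega_A\otimes_{\max}\Omega_B$; (b) every $T\in\mathcal T$ maps $\Omega_A$ into itself and $\Omega_{AB}$ into itself (acting on either side), and any two pure local states are connected by elements of $\mathcal T$ depending continuously on an $\mathrm{SO}(m)$ parameter; (c) $(e\otimes f)\cdot\Phi_\mu$ does not depend on $\mu$ for any $e,f\in\mathcal E_{\mathrm{loc}}$, although the $\Phi_\mu$ are pairwise distinct (tomographic locality fails); (d) each $F_y$ lies in $\mathcal E_{AB}$, $\sum_yF_y=u\otimes u$, and $F_y\cdot(T^{(R)}_x\Phi_{\mathbf 0})=F_y\cdot\Phi_x=\delta_{y,x}$; hence the dense coding protocol (shared $\Phi_{\mathbf 0}$, encoding by $T^{(R)}_x$, decoding by $\{F_y\}$, uniform $x\in\{0,1\}^N$) achieves $I(X:Y)=N$, while the classical capacity of each local system is $1$ bit.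
   Context: $\Omega^{(n)}_m=\{(1,\mathbf 0,r)^{\mathrm t}:\mathbf 0\in\mathbb R^n,\ r\in\mathbb R^m,\ \lVert r\rVert\le1\}\subset\mathbb R^{1+n+m}$, unit effect $u=(1,\mathbf 0)^{\mathrm t}$ (zero in $\mathbb R^{n+m}$), local effect set $\mathcal E_{\mathrm{loc}}=$ convex hull of the zero vector, $u$, and $\tfrac12(1,\mathbf 0,r)^{\mathrm t}$ for unit $r\in\mathbb R^m$. Classical capacity is defined as the supremum of $I(X:Y)$ over finite message distributions, states and measurements (families in $\mathcal E_{\mathrm{loc}}$ summing to $u$) with $p(y|x)=e_y\cdot\omega_x$. Bipartite states are real $(1+n+m)\times(1+n+m)$ matrices, identified with tensors via $v\otimes w=vw^{\mathrm t}$, inner product $X\cdot Y=\mathrm{Tr}(X^{\mathrm t}Y)$; $\Omega_A\otimes_{\min}\Omega_B$ is the convex hull of product states; $\Omega_A\otimes_{\max}\Omega_B=\{\phi:(u\otimes u)\cdot\phi=1,(e\otimes f)\cdot\phi\ge0\ \forall e,f\in\mathcal E_{\mathrm{loc}}\}$. Coordinates of $\mathbb R^{2^N}$ are indexed by $\nu\in\{0,1\}^N$ with $\nu=\mathbf 0$ first; $(d_\mu)_\nu=(-1)^{\mu\cdot\nu}$ ($\mu\cdot\nu$ = inner product mod 2); $\phi_\mu=T_\mu=\mathrm{diag}(d_\mu)$ ($2^N\times2^N$), $E_\mu=2^{-N}\phi_\mu$. Define $T^{(R)}_\mu=\begin{pmatrix}T_\mu&0\\0&R\end{pmatrix}$ for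 $R\in\mathrm{SO}(m)$ and $\mu\in\{0,1\}^N$, $\mathcal T=\{T^{(R)}_\mu\}$; $\Phi_\mu=\begin{pmatrix}\phi_\mu&0\\0&0\end{pmatrix}$ (zero $m\times m$ block); $\Omega_{AB}=$ convex hull of $\Omega_A\otimes_{\min}\Omega_B\cup\Lambda$; $\mathcal E_{AB}=\{E:0\le E\cdot\phi\le1\ \forall\phi\in\Omega_{AB}\}$; $F_y=2^{-N}\Phi_y$. Local transformations act on $A$ as $\phi\mapsto T\phi$ and on $B$ as $\phi\mapsto\phi T^{\mathrm t}$. *)

theory Defs
  imports "HOL-Analysis.Analysis" "HOL-Library.Function_Algebras"
begin

instantiation "fun" :: (type, real_vector) real_vector
begin
definition scaleR_fun :: "real \<Rightarrow> ('a \<Rightarrow> 'b) \<Rightarrow> 'a \<Rightarrow> 'b"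
  where "scaleR_fun c f = (\<lambda>x. c *\<^sub>R f x)"
instance
  by standard (auto simp: scaleR_fun_def fun_eq_iff scaleR_add_right scaleR_add_left)
end

text \<open>Vectors of R^(1+n+m) = R^(2^N+m) are functions nat => real that vanish at indices
  >= 2^N+m; matrices are functions nat => nat => real vanishing outside the index square.
  The coordinate indexed by nu in {0,1}^N is the natural number k < 2^N whose binary digits
  are nu (so nu = 0 is index 0, coming first); the last m coordinates are 2^N, ..., 2^N+m-1.\<close>

definition dimD :: "nat \<Rightarrow> nat \<Rightarrow> nat" where
  "dimD N m = 2^N + m"

text \<open>mu . nu (mod 2 inner product) realised via the parity of common one bits.\<close>
definition bdot :: "nat \<Rightarrow> nat \<Rightarrow> nat \<Rightarrow> nat" where
  "bdot N mu nu = card {i. i < N \<and> bit mu i \<and> bit nu i}"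

definition dvec :: "nat \<Rightarrow> nat \<Rightarrow> nat \<Rightarrow> real" where
  "dvec N mu = (\<lambda>k. if k < 2^N then (-1) ^ bdot N mu k else 0)"

definition supp_vec :: "nat \<Rightarrow> (nat \<Rightarrow> real) \<Rightarrow> bool" where
  "supp_vec D v \<longleftrightarrow> (\<forall>i. D \<le> i \<longrightarrow> v i = 0)"

definition supp_mat :: "nat \<Rightarrow> (nat \<Rightarrow> nat \<Rightarrow> real) \<Rightarrow> bool" where
  "supp_mat D X \<longleftrightarrow> (\<forall>i j. D \<le> i \<or> D \<le> j \<longrightarrow> X i j = 0)"

definition vdot :: "nat \<Rightarrow> (nat \<Rightarrow> real) \<Rightarrow> (nat \<Rightarrow> real) \<Rightarrow> real" where
  "vdot D v w = (\<Sum>i<D. v i * w i)"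

definition mdot :: "nat \<Rightarrow> (nat \<Rightarrow> nat \<Rightarrow> real) \<Rightarrow> (nat \<Rightarrow> nat \<Rightarrow> real) \<Rightarrow> real" where
  "mdot D X Y = (\<Sum>i<D. \<Sum>j<D. X i j * Y i j)"

definition tens :: "(nat \<Rightarrow> real) \<Rightarrow> (nat \<Rightarrow> real) \<Rightarrow> nat \<Rightarrow> nat \<Rightarrow> real" where
  "tens v w = (\<lambda>i j. v i * w j)"

definition mmul :: "nat \<Rightarrow> (nat \<Rightarrow> nat \<Rightarrow> real) \<Rightarrow> (nat \<Rightarrow> nat \<Rightarrow> real) \<Rightarrow> nat \<Rightarrow> nat \<Rightarrow> real" where
  "mmul D A B = (\<lambda>i j. if i < D \<and> j < D then \<Sum>k<D. A i k * B k j else 0)"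

definition mvec :: "nat \<Rightarrow> (nat \<Rightarrow> nat \<Rightarrow> real) \<Rightarrow> (nat \<Rightarrow> real) \<Rightarrow> nat \<Rightarrow> real" where
  "mvec D A v = (\<lambda>i. if i < D then \<Sum>k<D. A i k * v k else 0)"

definition mtrans :: "(nat \<Rightarrow> nat \<Rightarrow> real) \<Rightarrow> nat \<Rightarrow> nat \<Rightarrow> real" where
  "mtrans A = (\<lambda>i j. A j i)"

definition SOm :: "nat \<Rightarrow> (nat \<Rightarrow> nat \<Rightarrow> real) set" where
  "SOm m = {R. supp_mat m R
      \<and> (\<forall>i<m. \<forall>j<m. (\<Sum>k<m. R k i * R k j) = (if i = j then 1 else 0))
      \<and> (\<Sum>p | p permutes {..<m}. of_int (sign p) * (\<Prod>i<m. R i (p i))) = 1}"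

definition idm :: "nat \<Rightarrow> nat \<Rightarrow> nat \<Rightarrow> real" where
  "idm m = (\<lambda>i j. if i = j \<and> i < m then 1 else 0)"

definition omegaL :: "nat \<Rightarrow> nat \<Rightarrow> (nat \<Rightarrow> real) set" where
  "omegaL N m = {v. supp_vec (dimD N m) v \<and> v 0 = 1 \<and> (\<forall>i. 0 < i \<and> i < 2^N \<longrightarrow> v i = 0)
                  \<and> (\<Sum>i<m. (v (2^N + i))^2) \<le> 1}"

definition unitE :: "nat \<Rightarrow> real" where
  "unitE = (\<lambda>i. if i = 0 then 1 else 0)"

definition halfvec :: "nat \<Rightarrow> nat \<Rightarrow> (nat \<Rightarrow> real) \<Rightarrow> nat \<Rightarrow> real" where
  "halfvec N m r = (\<lambda>i. if i = 0 then 1/2 else if 2^N \<le> i \<and> i < dimD N m then r (i - 2^N) / 2 else 0)"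

definition Eloc :: "nat \<Rightarrow> nat \<Rightarrow> (nat \<Rightarrow> real) set" where
  "Eloc N m = convex hull ({0, unitE} \<union> {halfvec N m r | r. (\<Sum>i<m. (r i)^2) = 1})"

definition tmin :: "nat \<Rightarrow> nat \<Rightarrow> (nat \<Rightarrow> nat \<Rightarrow> real) set" where
  "tmin N m = convex hull {tens v w | v w. v \<in> omegaL N m \<and> w \<in> omegaL N m}"

definition tmax :: "nat \<Rightarrow> nat \<Rightarrow> (nat \<Rightarrow> nat \<Rightarrow> real) set" where
  "tmax N m = {phi. supp_mat (dimD N m) phi \<and> mdot (dimD N m) (tens unitE unitE) phi = 1
      \<and> (\<forall>e\<in>Eloc N m. \<forall>f\<in>Eloc N m. 0 \<le> mdot (dimD N m) (tens e f) phi)}"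

definition TR :: "nat \<Rightarrow> nat \<Rightarrow> nat \<Rightarrow> (nat \<Rightarrow> nat \<Rightarrow> real) \<Rightarrow> nat \<Rightarrow> nat \<Rightarrow> real" where
  "TR N m mu R = (\<lambda>i j.
      if i < 2^N \<and> j < 2^N then (if i = j then dvec N mu i else 0)
      else if 2^N \<le> i \<and> i < dimD N m \<and> 2^N \<le> j \<and> j < dimD N m then R (i - 2^N) (j - 2^N)
      else 0)"

definition Tset :: "nat \<Rightarrow> nat \<Rightarrow> (nat \<Rightarrow> nat \<Rightarrow> real) set" where
  "Tset N m = {TR N m mu R | mu R. mu < 2^N \<and> R \<in> SOm m}"

definition Phi :: "nat \<Rightarrow> nat \<Rightarrow> nat \<Rightarrow> nat \<Rightarrow> real" where
  "Phi N mu = (\<lambda>i j. if i = j \<and> i < 2^N then dvec N mu i else 0)"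

definition Lam :: "nat \<Rightarrow> nat \<Rightarrow> (nat \<Rightarrow> nat \<Rightarrow> real) set" where
  "Lam N m = {mmul (dimD N m) (mmul (dimD N m) T (Phi N 0)) (mtrans T') | T T'.
                 T \<in> Tset N m \<and> T' \<in> Tset N m}"

definition OmegaAB :: "nat \<Rightarrow> nat \<Rightarrow> (nat \<Rightarrow> nat \<Rightarrow> real) set" where
  "OmegaAB N m = convex hull (tmin N m \<union> Lam N m)"

definition EAB :: "nat \<Rightarrow> nat \<Rightarrow> (nat \<Rightarrow> nat \<Rightarrow> real) set" where
  "EAB N m = {E. supp_mat (dimD N m) E \<and>
      (\<forall>phi\<in>OmegaAB N m. 0 \<le> mdot (dimD N m) E phi \<and> mdot (dimD N m) E phi \<le> 1)}"

definition Fy :: "nat \<Rightarrow> nat \<Rightarrow> nat \<Rightarrow> nat \<Rightarrow> real" where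
  "Fy N y = (1 / 2^N) *\<^sub>R Phi N y"

text \<open>I(X:Y) for messages x < k with distribution p and outcomes y < l with p(y|x) = W x y.
  Terms with p(x) p(y|x) = 0 contribute 0 (note log 2 0 = 0 and x/0 = 0 in HOL).\<close>
definition mutual_info :: "nat \<Rightarrow> nat \<Rightarrow> (nat \<Rightarrow> real) \<Rightarrow> (nat \<Rightarrow> nat \<Rightarrow> real) \<Rightarrow> real" where
  "mutual_info k l p W =
     (\<Sum>x<k. \<Sum>y<l. p x * W x y * log 2 (W x y / (\<Sum>x'<k. p x' * W x' y)))"

definition capacity :: "('s set) \<Rightarrow> ('s set) \<Rightarrow> 's::ab_group_add \<Rightarrow> ('s \<Rightarrow> 's \<Rightarrow> real) \<Rightarrow> real" where
  "capacity S E u ip = Sup {mutual_info k l p (\<lambda>x y. ip (e y) (omega x)) | k l p omega e.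
       0 < k \<and> (\<forall>x<k. 0 \<le> p x) \<and> (\<Sum>x<k. p x) = 1 \<and> (\<forall>x<k. omega x \<in> S)
       \<and> (\<forall>y<l. e y \<in> E) \<and> (\<Sum>y<l. e y) = u}"

end

theory Submission
  imports Defs "Jordan_Normal_Form.Determinant"
begin


lemma bdot_sym: "bdot N a b = bdot N b a"
  unfolding bdot_def by (metis (mono_tags) conj_commute)

lemma card_symdiff:
  assumes "finite A" "finite B"
  shows "card ((A - B) \<union> (B - A)) + 2 * card (A \<inter> B) = card A + card B"
proof -
  have d: "(A - B) \<inter> (B - A) = {}" by blast
  have "card ((A - B) \<union> (B - A)) = card (A - B) + card (B - A)"
    using card_Un_disjoint[OF _ _ d] assms by auto
  moreover have "card (A - B) + card (A \<inter> B) = card A"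
    using assms by (metis card_Diff_subset_Int card_mono finite_Int inf_le1 le_add_diff_inverse2 inf_commute)
  moreover have "card (B - A) + card (A \<inter> B) = card B"
    using assms by (metis card_Diff_subset_Int card_mono finite_Int inf_le2 le_add_diff_inverse2 inf_commute)
  ultimately show ?thesis by simp
qed

lemma sgn_bdot_xor:
  "(-1::real) ^ bdot N a (xor b c) = (-1) ^ bdot N a b * (-1) ^ bdot N a c"
proof -
  define A where "A = {i. i < N \<and> bit a i \<and> bit b i}"
  define B where "B = {i. i < N \<and> bit a i \<and> bit c i}"
  have fA: "finite A" "finite B" unfolding A_def B_def by auto
  have e: "{i. i < N \<and> bit a i \<and> bit (xor b c) i} = (A - B) \<union> (B - A)"
    unfolding A_def B_def by (auto simp: bit_xor_iff)
  have c: "bdot N a (xor b c) + 2 * card (A \<inter> B) = bdot N a b + bdot N a c"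
    unfolding bdot_def e using card_symdiff[OF fA] unfolding A_def B_def by simp
  have "(-1::real) ^ (bdot N a b + bdot N a c) = (-1) ^ bdot N a (xor b c) * ((-1)^2) ^ card (A \<inter> B)"
    unfolding c[symmetric] power_add power_mult by simp
  then show ?thesis by (simp add: power_add)
qed

lemma xor_less: "(a::nat) < 2^N \<Longrightarrow> b < 2^N \<Longrightarrow> xor a b < 2^N"
  by (metis take_bit_nat_eq_self_iff take_bit_xor)

lemma dvec_mult: "k < 2^N \<Longrightarrow> dvec N a k * dvec N b k = dvec N (xor a b) k"
  unfolding dvec_def by (simp add: bdot_sym[of N _ k] sgn_bdot_xor)

lemma dvec_sym: "k < 2^N \<Longrightarrow> j < 2^N \<Longrightarrow> dvec N j k = dvec N k j"
  unfolding dvec_def by (simp add: bdot_sym)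

lemma bdot_zero[simp]: "bdot N 0 k = 0" "bdot N k 0 = 0"
  unfolding bdot_def by auto

lemma dvec_zero[simp]: "k < 2^N \<Longrightarrow> dvec N 0 k = 1" "dvec N mu 0 = 1"
  unfolding dvec_def by auto

lemma bdot_pow: "j < N \<Longrightarrow> bit y j \<Longrightarrow> bdot N y (2^j) = 1"
proof -
  assume a: "j < N" "bit y j"
  have "{i. i < N \<and> bit y i \<and> bit ((2::nat)^j) i} = {j}" using a by (auto simp: bit_exp_iff)
  then show ?thesis unfolding bdot_def by simp
qed

lemma char_sum:
  assumes y: "y < 2^N"
  shows "(\<Sum>k<2^N. dvec N y k) = (if y = 0 then 2^N else 0)"
proof (cases "y = 0")
  case True then show ?thesis by simp
next
  case False
  then obtain j where bj: "bit y j" using bit_eq_iff[of y 0] by auto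
  have jN: "j < N"
  proof (rule ccontr)
    assume "\<not> j < N"
    then have "bit (take_bit N y) j = False" by (simp add: bit_take_bit_iff)
    then show False using bj y by (simp add: take_bit_nat_eq_self)
  qed
  define s where "s = (\<lambda>k::nat. xor k (2^j))"
  have pj: "(2::nat)^j < 2^N" using jN by simp
  have ss: "s (s k) = k" for k unfolding s_def by (rule bit_eqI) (auto simp: bit_xor_iff)
  have sl: "k < 2^N \<Longrightarrow> s k < 2^N" for k unfolding s_def using xor_less pj by blast
  have neg: "k < 2^N \<Longrightarrow> dvec N y (s k) = - dvec N y k" for k
    using sl[of k] unfolding dvec_def s_def by (simp add: sgn_bdot_xor bdot_pow[OF jN bj])
  have "(\<Sum>k<2^N. dvec N y (s k)) = (\<Sum>k<2^N. dvec N y k)"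
    by (rule sum.reindex_bij_witness[where i=s and j=s]) (auto simp: ss sl)
  then have "(\<Sum>k<2^N. dvec N y k) = - (\<Sum>k<2^N. dvec N y k)"
    using neg by (simp add: sum_negf)
  then show ?thesis using False by simp
qed




lemma sum_split: fixes a m :: nat and f :: "nat \<Rightarrow> 'a::comm_monoid_add"
  shows "(\<Sum>i<a+m. f i) = (\<Sum>i<a. f i) + (\<Sum>j<m. f (a+j))"
  by (induction m) (auto simp: add.assoc)

lemma sum_if_eq: fixes D j :: nat shows "(\<Sum>k<D. (if k = j then g k else 0)) = (if j < D then g j else (0::real))"
  by (simp add: sum.delta)

lemma TR_Phi:
  assumes "a < 2^N" "mu < 2^N"
  shows "mmul (dimD N m) (TR N m a R) (Phi N mu) = Phi N (xor a mu)"
proof (intro ext)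
  fix i j
  show "mmul (dimD N m) (TR N m a R) (Phi N mu) i j = Phi N (xor a mu) i j"
  proof (cases "i < dimD N m \<and> j < dimD N m")
    case True
    have "(\<Sum>k<dimD N m. TR N m a R i k * Phi N mu k j)
        = (\<Sum>k<dimD N m. (if k = j then TR N m a R i j * (if j < 2^N then dvec N mu j else 0) else 0))"
      by (rule sum.cong) (auto simp: Phi_def)
    also have "\<dots> = TR N m a R i j * (if j < 2^N then dvec N mu j else 0)"
      using True by (simp add: sum.delta)
    also have "\<dots> = Phi N (xor a mu) i j"
      by (auto simp: TR_def Phi_def dvec_mult[symmetric])
    finally show ?thesis using True by (simp add: mmul_def)
  next
    case False
    then show ?thesis by (auto simp: mmul_def Phi_def dimD_def)
  qed
qed

lemma Phi_TRt:
  assumes "b < 2^N" "mu < 2^N"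
  shows "mmul (dimD N m) (Phi N mu) (mtrans (TR N m b R)) = Phi N (xor mu b)"
proof (intro ext)
  fix i j
  show "mmul (dimD N m) (Phi N mu) (mtrans (TR N m b R)) i j = Phi N (xor mu b) i j"
  proof (cases "i < dimD N m \<and> j < dimD N m")
    case True
    have "(\<Sum>k<dimD N m. Phi N mu i k * mtrans (TR N m b R) k j)
        = (\<Sum>k<dimD N m. (if k = i then (if i < 2^N then dvec N mu i else 0) * TR N m b R j i else 0))"
      by (rule sum.cong) (auto simp: Phi_def mtrans_def)
    also have "\<dots> = (if i < 2^N then dvec N mu i else 0) * TR N m b R j i"
      using True by (simp add: sum.delta)
    also have "\<dots> = Phi N (xor mu b) i j"
      by (auto simp: TR_def Phi_def dvec_mult[symmetric])
    finally show ?thesis using True by (simp add: mmul_def)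
  next
    case False
    then show ?thesis by (auto simp: mmul_def Phi_def dimD_def)
  qed
qed

lemma Lam_sub: "Lam N m \<subseteq> {Phi N mu | mu. mu < 2^N}"
proof
  fix X assume "X \<in> Lam N m"
  then obtain a R b R' where X: "X = mmul (dimD N m) (mmul (dimD N m) (TR N m a R) (Phi N 0)) (mtrans (TR N m b R'))"
    and ab: "a < 2^N" "b < 2^N"
    unfolding Lam_def Tset_def by auto
  have "X = Phi N (xor (xor a 0) b)" unfolding X using ab
    by (simp add: TR_Phi Phi_TRt xor_less)
  moreover have "xor (xor a 0) b < 2^N" using ab by (simp add: xor_less)
  ultimately show "X \<in> {Phi N mu | mu. mu < 2^N}" by blast
qed

lemma Lam_eq:
  assumes "idm m \<in> SOm m"
  shows "Lam N m = {Phi N mu | mu. mu < 2^N}"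
proof
  show "{Phi N mu | mu. mu < 2^N} \<subseteq> Lam N m"
  proof
    fix X assume "X \<in> {Phi N mu | mu. mu < 2^N}"
    then obtain mu where X: "X = Phi N mu" and mu: "mu < 2^N" by auto
    have "X = mmul (dimD N m) (mmul (dimD N m) (TR N m mu (idm m)) (Phi N 0)) (mtrans (TR N m 0 (idm m)))"
      using mu by (simp add: TR_Phi Phi_TRt X)
    moreover have "TR N m mu (idm m) \<in> Tset N m"
      using mu assms unfolding Tset_def by blast
    moreover have "TR N m 0 (idm m) \<in> Tset N m"
      using assms unfolding Tset_def by (auto intro!: exI[of _ "0::nat"])
    ultimately show "X \<in> Lam N m" unfolding Lam_def by blast
  qed
qed (rule Lam_sub)




lemma fun_comb[simp]: "((u *\<^sub>R x + v *\<^sub>R y) :: nat \<Rightarrow> real) i = u * x i + v * y i"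
  by (simp add: scaleR_fun_def plus_fun_def)

lemma mat_comb[simp]: "((u *\<^sub>R x + v *\<^sub>R y) :: nat \<Rightarrow> nat \<Rightarrow> real) i j = u * x i j + v * y i j"
  by (simp add: scaleR_fun_def plus_fun_def)

lemma mat_scale[simp]: "((u *\<^sub>R x) :: nat \<Rightarrow> nat \<Rightarrow> real) i j = u * x i j"
  by (simp add: scaleR_fun_def)

lemma vec_scale[simp]: "((u *\<^sub>R x) :: nat \<Rightarrow> real) i = u * x i"
  by (simp add: scaleR_fun_def)

lemma vdot_lin: "vdot D (u *\<^sub>R x + v *\<^sub>R y) w = u * vdot D x w + v * vdot D y w"
  by (simp add: vdot_def sum_distrib_left sum.distrib algebra_simps)

lemma mdot_lin2: "mdot D X (u *\<^sub>R A + v *\<^sub>R B) = u * mdot D X A + v * mdot D X B"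
  by (simp add: mdot_def sum_distrib_left sum.distrib algebra_simps)

lemma mdot_scale1: "mdot D (c *\<^sub>R X) Y = c * mdot D X Y"
  by (simp add: mdot_def sum_distrib_left algebra_simps)

lemma mdot_sym: "mdot D X Y = mdot D Y X"
  by (simp add: mdot_def mult.commute)

lemma mdot_tens_tens: "mdot D (tens a b) (tens c d) = vdot D a c * vdot D b d"
  by (simp add: mdot_def vdot_def tens_def sum_product algebra_simps)

definition midz :: "nat \<Rightarrow> nat \<Rightarrow> (nat \<Rightarrow> real) \<Rightarrow> bool" where
  "midz N m e \<longleftrightarrow> (\<forall>i. 0 < i \<and> i < 2^N \<longrightarrow> e i = 0) \<and> (\<forall>i. dimD N m \<le> i \<longrightarrow> e i = 0)"

lemma omegaL_D:
  assumes "v \<in> omegaL N m"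
  shows "v 0 = 1" "midz N m v" "(\<Sum>i<m. (v (2^N + i))^2) \<le> 1"
  using assms unfolding omegaL_def midz_def supp_vec_def by auto

lemma Eloc_induct:
  assumes "convex C" "0 \<in> C" "unitE \<in> C" "\<And>r. (\<Sum>i<m. (r i)^2) = 1 \<Longrightarrow> halfvec N m r \<in> C"
  shows "Eloc N m \<subseteq> C"
  unfolding Eloc_def by (rule hull_minimal) (use assms in auto)

lemma vdot_low:
  assumes "midz N m e"
  shows "vdot (dimD N m) e v = e 0 * v 0 + (\<Sum>j<m. e (2^N + j) * v (2^N + j))"
proof -
  have "(\<Sum>i<2^N. e i * v i) = (\<Sum>i<(2::nat)^N. if i = 0 then e 0 * v 0 else 0)"
    by (rule sum.cong) (use assms in \<open>auto simp: midz_def\<close>)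
  also have "\<dots> = e 0 * v 0" by (simp add: sum.delta)
  finally show ?thesis unfolding vdot_def dimD_def sum_split by simp
qed

lemma midz_halfvec: "midz N m (halfvec N m r)"
  unfolding midz_def halfvec_def dimD_def by auto

lemma midz_unitE: "midz N m unitE"
  unfolding midz_def unitE_def dimD_def by auto

lemma cauchy1:
  fixes r s :: "nat \<Rightarrow> real"
  assumes "(\<Sum>i<m. (r i)^2) = 1" "(\<Sum>i<m. (s i)^2) \<le> 1"
  shows "\<bar>\<Sum>i<m. r i * s i\<bar> \<le> 1"
proof -
  have "0 \<le> (\<Sum>i<m. (r i - s i)^2)" by (simp add: sum_nonneg)
  also have "\<dots> = (\<Sum>i<m. (r i)^2) - 2 * (\<Sum>i<m. r i * s i) + (\<Sum>i<m. (s i)^2)"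
    by (simp add: power2_diff sum.distrib sum_subtractf sum_distrib_left algebra_simps)
  finally have 1: "2 * (\<Sum>i<m. r i * s i) \<le> 2" using assms by linarith
  have "0 \<le> (\<Sum>i<m. (r i + s i)^2)" by (simp add: sum_nonneg)
  also have "\<dots> = (\<Sum>i<m. (r i)^2) + 2 * (\<Sum>i<m. r i * s i) + (\<Sum>i<m. (s i)^2)"
    by (simp add: power2_sum sum.distrib sum_distrib_left algebra_simps)
  finally have 2: "-2 \<le> 2 * (\<Sum>i<m. r i * s i)" using assms by linarith
  from 1 2 show ?thesis by linarith
qed

lemma vdot_halfvec:
  assumes "v \<in> omegaL N m"
  shows "vdot (dimD N m) (halfvec N m r) v = 1/2 + (\<Sum>j<m. r j * v (2^N + j)) / 2"
  using vdot_low[OF midz_halfvec, of N m r v] omegaL_D[OF assms]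
  by (simp add: halfvec_def dimD_def sum_divide_distrib)

lemma vdot_unitE:
  assumes "v \<in> omegaL N m"
  shows "vdot (dimD N m) unitE v = 1"
  using vdot_low[OF midz_unitE, of N m v] omegaL_D[OF assms] by (simp add: unitE_def)

lemma Eloc_props:
  assumes "e \<in> Eloc N m"
  shows "midz N m e \<and> 0 \<le> e 0 \<and> e 0 \<le> 1
     \<and> (\<forall>v\<in>omegaL N m. 0 \<le> vdot (dimD N m) e v \<and> vdot (dimD N m) e v \<le> 2 * e 0)"
proof -
  let ?C = "{e. midz N m e \<and> 0 \<le> e 0 \<and> e 0 \<le> 1
     \<and> (\<forall>v\<in>omegaL N m. 0 \<le> vdot (dimD N m) e v \<and> vdot (dimD N m) e v \<le> 2 * e 0)}"
  have "Eloc N m \<subseteq> ?C"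
  proof (rule Eloc_induct)
    show "convex ?C"
    proof (rule convexI)
      fix x y :: "nat \<Rightarrow> real" and u v :: real
      assume x: "x \<in> ?C" and y: "y \<in> ?C" and uv: "0 \<le> u" "0 \<le> v" "u + v = 1"
      have "midz N m (u *\<^sub>R x + v *\<^sub>R y)" using x y by (simp add: midz_def)
      moreover have "0 \<le> u * x 0 + v * y 0" using x y uv by simp
      moreover have "u * x 0 + v * y 0 \<le> 1"
      proof -
        have "u * x 0 \<le> u" "v * y 0 \<le> v" using x y uv by (simp_all add: mult_left_le)
        then show ?thesis using uv by linarith
      qed
      moreover have "\<forall>w\<in>omegaL N m. 0 \<le> vdot (dimD N m) (u *\<^sub>R x + v *\<^sub>R y) w
           \<and> vdot (dimD N m) (u *\<^sub>R x + v *\<^sub>R y) w \<le> 2 * (u * x 0 + v * y 0)"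
      proof
        fix w assume w: "w \<in> omegaL N m"
        have a: "0 \<le> vdot (dimD N m) x w" "vdot (dimD N m) x w \<le> 2 * x 0"
              "0 \<le> vdot (dimD N m) y w" "vdot (dimD N m) y w \<le> 2 * y 0"
          using x y w by auto
        have "u * vdot (dimD N m) x w \<le> u * (2 * x 0)" "v * vdot (dimD N m) y w \<le> v * (2 * y 0)"
          using a uv by (simp_all add: mult_left_mono)
        then show "0 \<le> vdot (dimD N m) (u *\<^sub>R x + v *\<^sub>R y) w
           \<and> vdot (dimD N m) (u *\<^sub>R x + v *\<^sub>R y) w \<le> 2 * (u * x 0 + v * y 0)"
          using a uv by (simp add: vdot_lin algebra_simps)
      qed
      ultimately show "u *\<^sub>R x + v *\<^sub>R y \<in> ?C" by simp
    qed
  next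
    show "0 \<in> ?C" by (simp add: midz_def vdot_def)
  next
    show "unitE \<in> ?C" using midz_unitE vdot_unitE by (simp add: unitE_def)
  next
    fix r :: "nat \<Rightarrow> real" assume r: "(\<Sum>i<m. (r i)^2) = 1"
    have "\<forall>v\<in>omegaL N m. 0 \<le> vdot (dimD N m) (halfvec N m r) v \<and> vdot (dimD N m) (halfvec N m r) v \<le> 1"
    proof
      fix v assume v: "v \<in> omegaL N m"
      have "\<bar>\<Sum>j<m. r j * v (2^N + j)\<bar> \<le> 1" by (rule cauchy1[OF r omegaL_D(3)[OF v]])
      then show "0 \<le> vdot (dimD N m) (halfvec N m r) v \<and> vdot (dimD N m) (halfvec N m r) v \<le> 1"
        unfolding vdot_halfvec[OF v] by linarith
    qed
    then show "halfvec N m r \<in> ?C" using midz_halfvec by (simp add: halfvec_def)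
  qed
  then show ?thesis using assms by blast
qed




lemma xor_eq0: "xor (y::nat) x = 0 \<longleftrightarrow> y = x"
proof
  assume "xor y x = 0"
  then have "bit (xor y x) n = bit 0 n" for n by simp
  then have "bit y n = bit x n" for n by (simp add: bit_xor_iff)
  then show "y = x" by (simp add: bit_eq_iff)
qed simp

lemma mdot_tens_Phi:
  assumes "midz N m e" "midz N m f"
  shows "mdot (dimD N m) (tens e f) (Phi N mu) = e 0 * f 0"
proof -
  have "mdot (dimD N m) (tens e f) (Phi N mu)
      = (\<Sum>i<dimD N m. \<Sum>j<dimD N m. if j = i then e i * f i * (if i < 2^N then dvec N mu i else 0) else 0)"
    unfolding mdot_def by (intro sum.cong) (auto simp: tens_def Phi_def)
  also have "\<dots> = (\<Sum>i<dimD N m. e i * f i * (if i < 2^N then dvec N mu i else 0))"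
    by (simp add: sum.delta)
  also have "\<dots> = (\<Sum>i<dimD N m. if i = 0 then e 0 * f 0 else 0)"
    by (rule sum.cong) (use assms in \<open>auto simp: midz_def\<close>)
  also have "\<dots> = e 0 * f 0" by (simp add: sum.delta dimD_def)
  finally show ?thesis .
qed

lemma mdot_Phi_Phi:
  assumes "y < 2^N" "x < 2^N"
  shows "mdot (dimD N m) (Phi N y) (Phi N x) = (if y = x then 2^N else 0)"
proof -
  have "mdot (dimD N m) (Phi N y) (Phi N x)
      = (\<Sum>i<dimD N m. \<Sum>j<dimD N m. if j = i then (if i < 2^N then dvec N y i * dvec N x i else 0) else 0)"
    unfolding mdot_def by (intro sum.cong) (auto simp: Phi_def)
  also have "\<dots> = (\<Sum>i<dimD N m. (if i < 2^N then dvec N y i * dvec N x i else 0))"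
    by (simp add: sum.delta)
  also have "\<dots> = (\<Sum>i<(2::nat)^N. dvec N (xor y x) i)"
    unfolding dimD_def sum_split by (simp add: dvec_mult)
  also have "\<dots> = (if y = x then 2^N else 0)"
    using char_sum[OF xor_less[OF assms]] by (simp add: xor_eq0)
  finally show ?thesis .
qed

lemma OmegaAB_induct:
  assumes "convex C" "\<And>v w. v \<in> omegaL N m \<Longrightarrow> w \<in> omegaL N m \<Longrightarrow> tens v w \<in> C"
    "\<And>mu. mu < 2^N \<Longrightarrow> Phi N mu \<in> C"
  shows "OmegaAB N m \<subseteq> C"
  unfolding OmegaAB_def
proof (rule hull_minimal)
  have "tmin N m \<subseteq> C" unfolding tmin_def by (rule hull_minimal) (use assms in auto)
  moreover have "Lam N m \<subseteq> C" using Lam_sub assms(3) by blast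
  ultimately show "tmin N m \<union> Lam N m \<subseteq> C" by blast
qed (rule assms(1))

lemma tens_supp: "midz N m v \<Longrightarrow> midz N m w \<Longrightarrow> supp_mat (dimD N m) (tens v w)"
  unfolding supp_mat_def midz_def tens_def by auto

lemma Phi_supp: "supp_mat (dimD N m) (Phi N mu)"
  unfolding supp_mat_def Phi_def dimD_def by auto

lemma tmax_convex: "convex (tmax N m)"
proof (rule convexI)
  fix x y :: "nat \<Rightarrow> nat \<Rightarrow> real" and u v :: real
  assume x: "x \<in> tmax N m" and y: "y \<in> tmax N m" and uv: "0 \<le> u" "0 \<le> v" "u + v = 1"
  show "u *\<^sub>R x + v *\<^sub>R y \<in> tmax N m"
    using x y uv unfolding tmax_def supp_mat_def by (auto simp: mdot_lin2)
qed

lemma tens_tmax: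
  assumes "v \<in> omegaL N m" "w \<in> omegaL N m"
  shows "tens v w \<in> tmax N m"
  unfolding tmax_def
  using tens_supp[OF omegaL_D(2)[OF assms(1)] omegaL_D(2)[OF assms(2)]]
    vdot_unitE[OF assms(1)] vdot_unitE[OF assms(2)] Eloc_props assms
  by (auto simp: mdot_tens_tens)

lemma Phi_tmax: "Phi N mu \<in> tmax N m"
  unfolding tmax_def
  using Phi_supp mdot_tens_Phi[OF midz_unitE midz_unitE] mdot_tens_Phi Eloc_props
  by (auto simp: unitE_def)

lemma OmegaAB_tmax: "OmegaAB N m \<subseteq> tmax N m"
  by (rule OmegaAB_induct[OF tmax_convex tens_tmax Phi_tmax])

lemma mdot_Phi_tens:
  assumes "v \<in> omegaL N m" "w \<in> omegaL N m"
  shows "mdot (dimD N m) (Phi N y) (tens v w) = 1"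
  using mdot_tens_Phi[OF omegaL_D(2)[OF assms(1)] omegaL_D(2)[OF assms(2)]] omegaL_D(1)[OF assms(1)]
    omegaL_D(1)[OF assms(2)]
  by (simp add: mdot_sym)

lemma Fy_EAB:
  assumes "y < 2^N"
  shows "Fy N y \<in> EAB N m"
proof -
  let ?C = "{phi. 0 \<le> mdot (dimD N m) (Fy N y) phi \<and> mdot (dimD N m) (Fy N y) phi \<le> 1}"
  have "OmegaAB N m \<subseteq> ?C"
  proof (rule OmegaAB_induct)
    show "convex ?C"
    proof (rule convexI)
      fix x z :: "nat \<Rightarrow> nat \<Rightarrow> real" and u v :: real
      assume x: "x \<in> ?C" and z: "z \<in> ?C" and uv: "0 \<le> u" "0 \<le> v" "u + v = 1"
      have "u * mdot (dimD N m) (Fy N y) x \<le> u" "v * mdot (dimD N m) (Fy N y) z \<le> v"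
        using x z uv by (simp_all add: mult_left_le)
      then show "u *\<^sub>R x + v *\<^sub>R z \<in> ?C" using x z uv by (simp add: mdot_lin2)
    qed
  next
    fix v w assume "v \<in> omegaL N m" "w \<in> omegaL N m"
    then show "tens v w \<in> ?C" unfolding Fy_def by (simp add: mdot_scale1 mdot_Phi_tens)
  next
    fix mu :: nat assume "mu < 2^N"
    then show "Phi N mu \<in> ?C" using assms unfolding Fy_def by (simp add: mdot_scale1 mdot_Phi_Phi)
  qed
  moreover have "supp_mat (dimD N m) (Fy N y)"
    using Phi_supp unfolding Fy_def supp_mat_def by simp
  ultimately show ?thesis unfolding EAB_def by blast
qed

lemma sum_mat_apply: "finite A \<Longrightarrow> (\<Sum>y\<in>A. (F y :: nat \<Rightarrow> nat \<Rightarrow> real)) i j = (\<Sum>y\<in>A. F y i j)"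
  by (induction A rule: finite_induct) auto

lemma sum_Fy: "(\<Sum>y<2^N. Fy N y) = tens unitE unitE"
proof (intro ext)
  fix i j
  have "(\<Sum>y<(2::nat)^N. Fy N y) i j = (\<Sum>y<(2::nat)^N. (1/2^N) * Phi N y i j)"
    by (simp add: sum_mat_apply Fy_def)
  also have "\<dots> = (if i = j \<and> i < 2^N then (1/2^N) * (\<Sum>y<(2::nat)^N. dvec N i y) else 0)"
  proof (cases "i = j \<and> i < 2^N")
    case True
    then show ?thesis by (auto simp: Phi_def sum_distrib_left dvec_sym intro!: sum.cong)
  next
    case False
    then have "\<forall>y. Phi N y i j = 0" by (auto simp: Phi_def)
    then show ?thesis using False by auto
  qed
  also have "\<dots> = tens unitE unitE i j"
    by (auto simp: char_sum tens_def unitE_def)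
  finally show "(\<Sum>y<2^N. Fy N y) i j = tens unitE unitE i j" .
qed

lemma Fy_Phi: "y < 2^N \<Longrightarrow> x < 2^N \<Longrightarrow> mdot (dimD N m) (Fy N y) (Phi N x) = (if y = x then 1 else 0)"
  unfolding Fy_def by (simp add: mdot_scale1 mdot_Phi_Phi)

lemma mi_N:
  fixes W :: "nat \<Rightarrow> nat \<Rightarrow> real"
  assumes "\<And>x y. x < 2^N \<Longrightarrow> y < 2^N \<Longrightarrow> W x y = (if y = x then 1 else 0)"
  shows "mutual_info (2^N) (2^N) (\<lambda>x. 1 / 2^N) W = real N"
proof -
  have q: "(\<Sum>x'<(2::nat)^N. 1 / 2^N * W x' y) = 1 / 2^N" if "y < 2^N" for y
  proof -
    have "(\<Sum>x'<(2::nat)^N. 1 / 2^N * W x' y) = (\<Sum>x'<(2::nat)^N. if x' = y then 1 / 2^N else 0)"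
      by (rule sum.cong) (use that assms in auto)
    then show ?thesis using that by (simp add: sum.delta)
  qed
  have "mutual_info (2^N) (2^N) (\<lambda>x. 1 / 2^N) W
      = (\<Sum>x<(2::nat)^N. \<Sum>y<(2::nat)^N. if y = x then 1 / 2^N * log 2 (2^N) else 0)"
    unfolding mutual_info_def
  proof (intro sum.cong refl)
    fix x y assume x: "x \<in> {..<(2::nat)^N}" and y: "y \<in> {..<(2::nat)^N}"
    have qq: "(\<Sum>x'<(2::nat)^N. 1 / 2^N * W x' y) = 1 / 2^N" using q y by simp
    show "1 / 2 ^ N * W x y * log 2 (W x y / (\<Sum>x'<2 ^ N. 1 / 2 ^ N * W x' y))
       = (if y = x then 1 / 2^N * log 2 (2^N) else 0)"
      unfolding qq using assms[of x y] x y by simp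
  qed
  also have "\<dots> = (\<Sum>x<(2::nat)^N. 1 / 2^N * real N)"
    by (simp add: sum.delta log_pow_cancel)
  also have "\<dots> = real N" by simp
  finally show ?thesis .
qed




lemma mvec_TR_low:
  assumes "i < 2^N"
  shows "mvec (dimD N m) (TR N m mu R) v i = dvec N mu i * v i"
proof -
  have "(\<Sum>k<dimD N m. TR N m mu R i k * v k) = (\<Sum>k<dimD N m. if k = i then dvec N mu i * v i else 0)"
    by (rule sum.cong) (use assms in \<open>auto simp: TR_def\<close>)
  then show ?thesis using assms by (simp add: mvec_def sum.delta dimD_def)
qed

lemma mvec_TR_block:
  assumes "j < m"
  shows "mvec (dimD N m) (TR N m mu R) v (2^N + j) = (\<Sum>l<m. R j l * v (2^N + l))"
proof -
  have z: "(\<Sum>k<(2::nat)^N. TR N m mu R (2^N + j) k * v k) = 0"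
    by (rule sum.neutral) (auto simp: TR_def)
  have "(\<Sum>l<m. TR N m mu R (2^N + j) (2^N + l) * v (2^N + l)) = (\<Sum>l<m. R j l * v (2^N + l))"
    by (rule sum.cong) (use assms in \<open>auto simp: TR_def dimD_def\<close>)
  then show ?thesis using assms z unfolding mvec_def by (simp add: dimD_def sum_split)
qed

lemma mvec_out: "dimD N m \<le> i \<Longrightarrow> mvec (dimD N m) A v i = 0"
  by (simp add: mvec_def)

lemma SOm_orth: "R \<in> SOm m \<Longrightarrow> i < m \<Longrightarrow> j < m \<Longrightarrow> (\<Sum>k<m. R k i * R k j) = (if i = j then 1 else 0)"
  unfolding SOm_def by auto

lemma orth_norm:
  assumes R: "R \<in> SOm m"
  shows "(\<Sum>j<m. (\<Sum>l<m. R j l * s l)^2) = (\<Sum>l<m. (s l)^2)"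
proof -
  have "(\<Sum>j<m. (\<Sum>l<m. R j l * s l)^2) = (\<Sum>j<m. \<Sum>l<m. \<Sum>l'<m. s l * s l' * (R j l * R j l'))"
    by (simp add: power2_eq_square sum_product algebra_simps)
  also have "\<dots> = (\<Sum>l<m. \<Sum>j<m. \<Sum>l'<m. s l * s l' * (R j l * R j l'))"
    by (rule sum.swap)
  also have "\<dots> = (\<Sum>l<m. \<Sum>l'<m. \<Sum>j<m. s l * s l' * (R j l * R j l'))"
    by (rule sum.cong[OF refl], rule sum.swap)
  also have "\<dots> = (\<Sum>l<m. \<Sum>l'<m. s l * s l' * (\<Sum>j<m. R j l * R j l'))"
    by (simp add: sum_distrib_left)
  also have "\<dots> = (\<Sum>l<m. \<Sum>l'<m. if l' = l then s l * s l else 0)"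
    by (intro sum.cong refl) (auto simp: SOm_orth[OF R])
  also have "\<dots> = (\<Sum>l<m. (s l)^2)" by (simp add: power2_eq_square)
  finally show ?thesis .
qed

lemma mvec_TR_omegaL:
  assumes mu: "mu < 2^N" and R: "R \<in> SOm m" and v: "v \<in> omegaL N m"
  shows "mvec (dimD N m) (TR N m mu R) v \<in> omegaL N m"
proof -
  note vv = omegaL_D[OF v]
  have "(\<Sum>i<m. (mvec (dimD N m) (TR N m mu R) v (2^N + i))^2) = (\<Sum>l<m. (v (2^N + l))^2)"
    by (simp add: mvec_TR_block orth_norm[OF R])
  then show ?thesis
    using vv unfolding omegaL_def supp_vec_def midz_def
    by (auto simp: mvec_out mvec_TR_low)
qed

lemma mmul_tens_left:
  assumes "midz N m w"
  shows "mmul (dimD N m) T (tens v w) = tens (mvec (dimD N m) T v) w"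
  using assms unfolding midz_def
  by (auto simp: mmul_def tens_def mvec_def sum_distrib_right mult.assoc intro!: ext)

lemma mmul_tens_right:
  assumes "midz N m v"
  shows "mmul (dimD N m) (tens v w) (mtrans T) = tens v (mvec (dimD N m) T w)"
  using assms unfolding midz_def
  by (auto simp: mmul_def tens_def mvec_def mtrans_def sum_distrib_left algebra_simps intro!: ext)

lemma mmul_lin_left: "mmul D T (u *\<^sub>R A + v *\<^sub>R B) = u *\<^sub>R mmul D T A + v *\<^sub>R mmul D T B"
  by (auto simp: mmul_def sum_distrib_left sum.distrib algebra_simps intro!: ext)

lemma mmul_lin_right: "mmul D (u *\<^sub>R A + v *\<^sub>R B) M = u *\<^sub>R mmul D A M + v *\<^sub>R mmul D B M"
  by (auto simp: mmul_def sum_distrib_left sum.distrib algebra_simps intro!: ext)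

lemma tens_OmegaAB: "v \<in> omegaL N m \<Longrightarrow> w \<in> omegaL N m \<Longrightarrow> tens v w \<in> OmegaAB N m"
  unfolding OmegaAB_def tmin_def
  by (rule hull_inc, rule UnI1, rule hull_inc) blast

lemma tmin_OmegaAB: "tmin N m \<subseteq> OmegaAB N m"
  unfolding OmegaAB_def by (meson hull_subset le_supE)

lemma Phi_OmegaAB: "idm m \<in> SOm m \<Longrightarrow> mu < 2^N \<Longrightarrow> Phi N mu \<in> OmegaAB N m"
  unfolding OmegaAB_def by (rule hull_inc, rule UnI2) (auto simp: Lam_eq)

lemma lin_pres:
  fixes L :: "(nat \<Rightarrow> nat \<Rightarrow> real) \<Rightarrow> (nat \<Rightarrow> nat \<Rightarrow> real)"
  assumes lin: "\<And>A B u v. L (u *\<^sub>R A + v *\<^sub>R B) = u *\<^sub>R L A + v *\<^sub>R L B"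
    and t: "\<And>v w. v \<in> omegaL N m \<Longrightarrow> w \<in> omegaL N m \<Longrightarrow> L (tens v w) \<in> OmegaAB N m"
    and p: "\<And>mu. mu < 2^N \<Longrightarrow> L (Phi N mu) \<in> OmegaAB N m"
    and phi: "phi \<in> OmegaAB N m"
  shows "L phi \<in> OmegaAB N m"
proof -
  have "OmegaAB N m \<subseteq> {phi. L phi \<in> OmegaAB N m}"
  proof (rule OmegaAB_induct)
    show "convex {phi. L phi \<in> OmegaAB N m}"
    proof (rule convexI)
      fix x y :: "nat \<Rightarrow> nat \<Rightarrow> real" and u v :: real
      assume "x \<in> {phi. L phi \<in> OmegaAB N m}" "y \<in> {phi. L phi \<in> OmegaAB N m}" "0 \<le> u" "0 \<le> v" "u + v = 1"
      moreover have "convex (OmegaAB N m)" unfolding OmegaAB_def by (rule convex_convex_hull)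
      ultimately have "u *\<^sub>R L x + v *\<^sub>R L y \<in> OmegaAB N m" unfolding convex_def by blast
      then show "u *\<^sub>R x + v *\<^sub>R y \<in> {phi. L phi \<in> OmegaAB N m}" by (simp add: lin)
    qed
  qed (use t p in auto)
  then show ?thesis using phi by blast
qed

lemma part_b:
  assumes idm: "idm m \<in> SOm m" and T: "T \<in> Tset N m"
  shows "(\<forall>v\<in>omegaL N m. mvec (dimD N m) T v \<in> omegaL N m)
     \<and> (\<forall>phi\<in>OmegaAB N m. mmul (dimD N m) T phi \<in> OmegaAB N m
          \<and> mmul (dimD N m) phi (mtrans T) \<in> OmegaAB N m)"
proof -
  obtain mu R where TT: "T = TR N m mu R" and mu: "mu < 2^N" and R: "R \<in> SOm m"
    using T unfolding Tset_def by auto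
  have 1: "\<forall>v\<in>omegaL N m. mvec (dimD N m) T v \<in> omegaL N m"
    using mvec_TR_omegaL[OF mu R] TT by simp
  have 2: "mmul (dimD N m) T phi \<in> OmegaAB N m" if "phi \<in> OmegaAB N m" for phi
  proof (rule lin_pres[OF mmul_lin_left _ _ that])
    fix v w assume vw: "v \<in> omegaL N m" "w \<in> omegaL N m"
    show "mmul (dimD N m) T (tens v w) \<in> OmegaAB N m"
      using mmul_tens_left[OF omegaL_D(2)[OF vw(2)]] tens_OmegaAB 1 vw by simp
  next
    fix nu :: nat assume nu: "nu < 2^N"
    show "mmul (dimD N m) T (Phi N nu) \<in> OmegaAB N m"
      using TT TR_Phi[OF mu nu] Phi_OmegaAB[OF idm xor_less[OF mu nu]] by simp
  qed
  have 3: "mmul (dimD N m) phi (mtrans T) \<in> OmegaAB N m" if "phi \<in> OmegaAB N m" for phi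
  proof (rule lin_pres[OF mmul_lin_right _ _ that])
    fix v w assume vw: "v \<in> omegaL N m" "w \<in> omegaL N m"
    show "mmul (dimD N m) (tens v w) (mtrans T) \<in> OmegaAB N m"
      using mmul_tens_right[OF omegaL_D(2)[OF vw(1)]] tens_OmegaAB 1 vw by simp
  next
    fix nu :: nat assume nu: "nu < 2^N"
    show "mmul (dimD N m) (Phi N nu) (mtrans T) \<in> OmegaAB N m"
      using TT Phi_TRt[OF mu nu] Phi_OmegaAB[OF idm xor_less[OF nu mu]] by simp
  qed
  show ?thesis using 1 2 3 by blast
qed




definition ldet :: "nat \<Rightarrow> (nat \<Rightarrow> nat \<Rightarrow> real) \<Rightarrow> real" where
  "ldet m R = (\<Sum>p | p permutes {..<m}. of_int (sign p) * (\<Prod>i<m. R i (p i)))"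

definition tomat :: "nat \<Rightarrow> (nat \<Rightarrow> nat \<Rightarrow> real) \<Rightarrow> real mat" where
  "tomat m R = mat m m (\<lambda>(i,j). R i j)"

lemma ldet_det: "ldet m R = det (tomat m R)"
proof -
  have "det (tomat m R) = (\<Sum>p \<in> {p. p permutes {0..<m}}. signof p * (\<Prod>i = 0..<m. tomat m R $$ (i, p i)))"
    unfolding det_def tomat_def by simp
  also have "\<dots> = (\<Sum>p \<in> {p. p permutes {..<m}}. of_int (sign p) * (\<Prod>i<m. R i (p i)))"
  proof (rule sum.cong)
    show "{p. p permutes {0..<m}} = {p. p permutes {..<m}}" by (simp add: atLeast0LessThan)
  next
    fix p assume "p \<in> {p. p permutes {..<m}}"
    then have pp: "p permutes {..<m}" by simp
    have "(\<Prod>i = 0..<m. tomat m R $$ (i, p i)) = (\<Prod>i<m. R i (p i))"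
      unfolding atLeast0LessThan
      by (rule prod.cong) (use permutes_in_image[OF pp] in \<open>auto simp: tomat_def\<close>)
    then show "signof p * (\<Prod>i = 0..<m. tomat m R $$ (i, p i)) = of_int (sign p) * (\<Prod>i<m. R i (p i))"
      by simp
  qed
  finally show ?thesis unfolding ldet_def by simp
qed

lemma orth_det:
  assumes "\<And>i j. i < m \<Longrightarrow> j < m \<Longrightarrow> (\<Sum>k<m. R k i * R k j) = (if i = j then 1 else 0)"
  shows "ldet m R * ldet m R = 1"
proof -
  let ?M = "tomat m R"
  have M: "?M \<in> carrier_mat m m" unfolding tomat_def by simp
  have "transpose_mat ?M * ?M = 1\<^sub>m m"
  proof (rule eq_matI)
    fix i j assume ij: "i < dim_row (1\<^sub>m m)" "j < dim_col (1\<^sub>m m)"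
    then have ij': "i < m" "j < m" by auto
    have "(transpose_mat ?M * ?M) $$ (i, j) = (\<Sum>k = 0..<m. R k i * R k j)"
      using ij' by (simp add: scalar_prod_def tomat_def)
    also have "\<dots> = (if i = j then 1 else 0)" using assms ij' by (simp add: atLeast0LessThan)
    finally show "(transpose_mat ?M * ?M) $$ (i, j) = 1\<^sub>m m $$ (i, j)" using ij' by simp
  qed (auto simp: tomat_def)
  then have "det (transpose_mat ?M * ?M) = 1" by simp
  moreover have "det (transpose_mat ?M * ?M) = det ?M * det ?M"
    using det_mult[of "transpose_mat ?M" m ?M] M det_transpose[OF M] by simp
  ultimately show ?thesis unfolding ldet_det by simp
qed

lemma SOm_iff: "R \<in> SOm m \<longleftrightarrow> supp_mat m R
      \<and> (\<forall>i<m. \<forall>j<m. (\<Sum>k<m. R k i * R k j) = (if i = j then 1 else 0)) \<and> ldet m R = 1"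
  unfolding SOm_def ldet_def by simp

lemma idm_SOm: "idm m \<in> SOm m"
proof -
  have "tomat m (idm m) = 1\<^sub>m m"
    by (rule eq_matI) (auto simp: tomat_def idm_def)
  then have "ldet m (idm m) = 1" by (simp add: ldet_det)
  moreover have "supp_mat m (idm m)" by (simp add: supp_mat_def idm_def)
  moreover have "(\<Sum>k<m. idm m k i * idm m k j) = (if i = j then 1 else 0)" if "i < m" "j < m" for i j
  proof -
    have "(\<Sum>k<m. idm m k i * idm m k j) = (\<Sum>k<m. if k = i then (if i = j then 1 else 0) else 0)"
      by (rule sum.cong) (auto simp: idm_def)
    then show ?thesis using that by (simp add: sum.delta)
  qed
  ultimately show ?thesis unfolding SOm_iff by blast
qed




lemma bil9:
  fixes X1 X2 X3 Y1 Y2 Y3 :: "nat \<Rightarrow> real"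
  shows "(\<Sum>k\<in>K. (X1 k + c1 * X2 k + c2 * X3 k) * (Y1 k + d1 * Y2 k + d2 * Y3 k))
   = (\<Sum>k\<in>K. X1 k * Y1 k) + d1 * (\<Sum>k\<in>K. X1 k * Y2 k) + d2 * (\<Sum>k\<in>K. X1 k * Y3 k)
   + c1 * (\<Sum>k\<in>K. X2 k * Y1 k) + c1 * d1 * (\<Sum>k\<in>K. X2 k * Y2 k) + c1 * d2 * (\<Sum>k\<in>K. X2 k * Y3 k)
   + c2 * (\<Sum>k\<in>K. X3 k * Y1 k) + c2 * d1 * (\<Sum>k\<in>K. X3 k * Y2 k) + c2 * d2 * (\<Sum>k\<in>K. X3 k * Y3 k)"
  by (simp add: algebra_simps sum.distrib sum_distrib_left)

lemma idm_left: "i < m \<Longrightarrow> (\<Sum>k<m. idm m k i * x k) = x i"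
proof -
  assume i: "i < m"
  have "(\<Sum>k<m. idm m k i * x k) = (\<Sum>k<m. if k = i then x i else 0)"
    by (rule sum.cong) (auto simp: idm_def)
  then show ?thesis using i by (simp add: sum.delta)
qed

lemma idm_right: "i < m \<Longrightarrow> (\<Sum>k<m. x k * idm m k i) = x i"
  using idm_left[of i m x] by (simp add: mult.commute)

lemma idm_idm: "i < m \<Longrightarrow> j < m \<Longrightarrow> (\<Sum>k<m. idm m k i * idm m k j) = (if i = j then 1 else 0)"
  using idm_left[of i m "\<lambda>k. idm m k j"] by (simp add: idm_def)

definition rotA :: "(nat \<Rightarrow> real) \<Rightarrow> (nat \<Rightarrow> real) \<Rightarrow> real \<Rightarrow> nat \<Rightarrow> real" where
  "rotA a b th = (\<lambda>j. (cos th - 1) * a j - sin th * b j)"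
definition rotB :: "(nat \<Rightarrow> real) \<Rightarrow> (nat \<Rightarrow> real) \<Rightarrow> real \<Rightarrow> nat \<Rightarrow> real" where
  "rotB a b th = (\<lambda>j. (cos th - 1) * b j + sin th * a j)"

definition rot :: "nat \<Rightarrow> (nat \<Rightarrow> real) \<Rightarrow> (nat \<Rightarrow> real) \<Rightarrow> real \<Rightarrow> nat \<Rightarrow> nat \<Rightarrow> real" where
  "rot m a b th = (\<lambda>i j. if i < m \<and> j < m then idm m i j + a i * rotA a b th j + b i * rotB a b th j else 0)"

lemma rot_alg: fixes c s ai aj bi bj :: real
  shows "((c-1)*aj - s*bj) * ai + ((c-1)*bj + s*aj)*bi + ((c-1)*ai - s*bi)*aj
    + ((c-1)*ai - s*bi)*((c-1)*aj - s*bj) + ((c-1)*bi + s*ai)*bj + ((c-1)*bi+s*ai)*((c-1)*bj + s*aj)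
    = (s^2 + c^2 - 1)*(ai*aj + bi*bj)"
  by (simp add: algebra_simps power2_eq_square)

locale onb =
  fixes m :: nat and a b :: "nat \<Rightarrow> real"
  assumes aa: "(\<Sum>k<m. a k * a k) = 1" and bb: "(\<Sum>k<m. b k * b k) = 1" and ab: "(\<Sum>k<m. a k * b k) = 0"
begin

lemma ba: "(\<Sum>k<m. b k * a k) = 0" using ab by (simp add: mult.commute)

lemma rot_orth:
  assumes i: "i < m" and j: "j < m"
  shows "(\<Sum>k<m. rot m a b th k i * rot m a b th k j) = (if i = j then 1 else 0)"
proof -
  let ?A = "rotA a b th" and ?B = "rotB a b th"
  have "(\<Sum>k<m. rot m a b th k i * rot m a b th k j)
      = (\<Sum>k<m. (idm m k i + ?A i * a k + ?B i * b k) * (idm m k j + ?A j * a k + ?B j * b k))"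
    by (rule sum.cong) (use i j in \<open>auto simp: rot_def algebra_simps\<close>)
  also have "\<dots> = (if i = j then 1 else 0) + (?A j * a i + ?B j * b i + ?A i * a j + ?A i * ?A j
       + ?B i * b j + ?B i * ?B j)"
    unfolding bil9 idm_idm[OF i j] idm_left[OF i] idm_right[OF j] aa bb ab ba by simp
  also have "\<dots> = (if i = j then 1 else 0) + ((sin th)^2 + (cos th)^2 - 1) * (a i * a j + b i * b j)"
    unfolding rotA_def rotB_def by (rule arg_cong[where f="\<lambda>x. _ + x"], rule rot_alg)
  also have "\<dots> = (if i = j then 1 else 0)" by simp
  finally show ?thesis .
qed

lemma rot_a:
  assumes i: "i < m"
  shows "(\<Sum>j<m. rot m a b th i j * a j) = cos th * a i + sin th * b i"
proof -
  have "(\<Sum>j<m. rot m a b th i j * a j)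
      = (\<Sum>j<m. idm m i j * a j + a i * (rotA a b th j * a j) + b i * (rotB a b th j * a j))"
    by (rule sum.cong) (use i in \<open>auto simp: rot_def algebra_simps\<close>)
  also have "\<dots> = a i + a i * (\<Sum>j<m. rotA a b th j * a j) + b i * (\<Sum>j<m. rotB a b th j * a j)"
  proof -
    have "(\<Sum>j<m. idm m i j * a j) = a i"
      using idm_left[of i m a] i by (simp add: idm_def eq_commute)
    then show ?thesis by (simp add: sum.distrib sum_distrib_left)
  qed
  also have "(\<Sum>j<m. rotA a b th j * a j) = cos th - 1"
  proof -
    have "(\<Sum>j<m. rotA a b th j * a j) = (\<Sum>j<m. (cos th - 1) * (a j * a j) - sin th * (b j * a j))"
      by (rule sum.cong) (auto simp: rotA_def algebra_simps)
    also have "\<dots> = (cos th - 1) * (\<Sum>j<m. a j * a j) - sin th * (\<Sum>j<m. b j * a j)"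
      by (simp add: sum_subtractf sum_distrib_left)
    finally show ?thesis by (simp add: aa ba)
  qed
  also have "(\<Sum>j<m. rotB a b th j * a j) = sin th"
  proof -
    have "(\<Sum>j<m. rotB a b th j * a j) = (\<Sum>j<m. (cos th - 1) * (b j * a j) + sin th * (a j * a j))"
      by (rule sum.cong) (auto simp: rotB_def algebra_simps)
    also have "\<dots> = (cos th - 1) * (\<Sum>j<m. b j * a j) + sin th * (\<Sum>j<m. a j * a j)"
      by (simp add: sum.distrib sum_distrib_left)
    finally show ?thesis by (simp add: aa ba)
  qed
  finally show ?thesis by (simp add: algebra_simps)
qed

lemma rot_0: "rot m a b 0 = idm m"
  by (auto simp: rot_def rotA_def rotB_def idm_def intro!: ext)

lemma rot_supp: "supp_mat m (rot m a b th)"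
  by (simp add: supp_mat_def rot_def)

lemma rot_cont: "continuous_on S (\<lambda>t. rot m a b (t * phi) i j)"
  unfolding rot_def rotA_def rotB_def by (cases "i < m \<and> j < m") (auto intro!: continuous_intros)

lemma rot_SOm:
  assumes t: "t \<in> {0..1}"
  shows "rot m a b (t * phi) \<in> SOm m"
proof -
  let ?f = "\<lambda>t. ldet m (rot m a b (t * phi))"
  have sq: "?f s * ?f s = 1" for s by (rule orth_det) (simp add: rot_orth)
  have cont: "continuous_on {0..t} ?f"
    unfolding ldet_def by (intro continuous_intros rot_cont)
  have f0: "?f 0 = 1" using idm_SOm[of m] by (simp add: rot_0 SOm_iff)
  have "?f t = 1"
  proof (rule ccontr)
    assume "?f t \<noteq> 1"
    then have "?f t = -1" using sq[of t] by (metis mult_cancel_left1 square_eq_1_iff)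
    then obtain x where "0 \<le> x" "x \<le> t" "?f x = 0"
      using IVT2'[of ?f t 0 0] cont f0 t by auto
    then show False using sq[of x] by simp
  qed
  then show ?thesis unfolding SOm_iff using rot_supp rot_orth by blast
qed

end




lemma sum_two:
  fixes f :: "nat \<Rightarrow> real"
  assumes "2 \<le> m" "\<And>i. 2 \<le> i \<Longrightarrow> f i = 0"
  shows "(\<Sum>i<m. f i) = f 0 + f 1"
proof -
  have "m = 2 + (m - 2)" using assms by simp
  then have "(\<Sum>i<m. f i) = (\<Sum>i<2. f i) + (\<Sum>j<m-2. f (2 + j))"
    by (metis sum_split)
  also have "(\<Sum>j<m-2. f (2 + j)) = 0" using assms(2) by simp
  finally show ?thesis by (simp add: numeral_2_eq_2)
qed

lemma exists_perp:
  assumes m: "2 \<le> m" and aa: "(\<Sum>k<m. a k * a k) = 1"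
  shows "\<exists>b. onb m a b"
proof (cases "a 0 = 0")
  case True
  define b where "b = (\<lambda>i::nat. if i = 0 then (1::real) else 0)"
  have "(\<Sum>k<m. b k * b k) = 1" "(\<Sum>k<m. a k * b k) = 0"
    using m True by (simp_all add: b_def if_distrib sum.delta cong: if_cong)
  then show ?thesis using aa by (auto simp: onb_def)
next
  case False
  define r where "r = sqrt (a 0 * a 0 + a 1 * a 1)"
  have r0: "0 < r"
  proof -
    have "0 < a 0 * a 0" using False by (auto simp: zero_less_mult_iff linorder_neq_iff)
    moreover have "0 \<le> a 1 * a 1" by simp
    ultimately have "0 < a 0 * a 0 + a 1 * a 1" by linarith
    then show ?thesis by (simp add: r_def)
  qed
  have r2: "r * r = a 0 * a 0 + a 1 * a 1" unfolding r_def
    by (simp add: add_nonneg_nonneg)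
  define b where "b = (\<lambda>i::nat. if i = 0 then - a 1 / r else if i = 1 then a 0 / r else 0)"
  have "(\<Sum>k<m. b k * b k) = b 0 * b 0 + b 1 * b 1" by (rule sum_two[OF m]) (simp add: b_def)
  also have "\<dots> = (a 1 * a 1 + a 0 * a 0) / (r * r)" by (simp add: b_def add_divide_distrib)
  also have "\<dots> = 1" using r0 r2 False by (simp add: add.commute)
  finally have 1: "(\<Sum>k<m. b k * b k) = 1" .
  have "(\<Sum>k<m. a k * b k) = a 0 * b 0 + a 1 * b 1" by (rule sum_two[OF m]) (simp add: b_def)
  also have "\<dots> = 0" by (simp add: b_def field_simps)
  finally have 2: "(\<Sum>k<m. a k * b k) = 0" .
  show ?thesis using aa 1 2 by (auto simp: onb_def)
qed

lemma unit_decomp: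
  assumes m: "2 \<le> m" and aa: "(\<Sum>k<m. a k * a k) = 1" and bb: "(\<Sum>k<m. b' k * b' k) = 1"
  shows "\<exists>b phi. onb m a b \<and> (\<forall>i<m. b' i = cos phi * a i + sin phi * b i)"
proof -
  define c where "c = (\<Sum>k<m. a k * b' k)"
  have "\<bar>c\<bar> \<le> 1" unfolding c_def
    by (rule cauchy1) (use aa bb in \<open>simp_all add: power2_eq_square\<close>)
  then have c1: "-1 \<le> c" "c \<le> 1" by auto
  define v where "v = (\<lambda>k. b' k - c * a k)"
  have vv: "(\<Sum>k<m. v k * v k) = 1 - c^2"
  proof -
    have "(\<Sum>k<m. v k * v k) = (\<Sum>k<m. b' k * b' k) - 2 * c * (\<Sum>k<m. a k * b' k) + c * c * (\<Sum>k<m. a k * a k)"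
      unfolding v_def by (simp add: algebra_simps sum_subtractf sum.distrib sum_distrib_left)
    then show ?thesis using aa bb by (simp add: c_def[symmetric] power2_eq_square)
  qed
  have av: "(\<Sum>k<m. a k * v k) = 0"
  proof -
    have "(\<Sum>k<m. a k * v k) = (\<Sum>k<m. a k * b' k) - c * (\<Sum>k<m. a k * a k)"
      unfolding v_def by (simp add: algebra_simps sum_subtractf sum_distrib_left)
    then show ?thesis using aa by (simp add: c_def[symmetric])
  qed
  define phi where "phi = arccos c"
  have cphi: "cos phi = c" and sphi: "sin phi = sqrt (1 - c^2)"
    unfolding phi_def using c1 by (auto simp: sin_arccos)
  show ?thesis
  proof (cases "c^2 < 1")
    case True
    define s where "s = sqrt (1 - c^2)"
    have s0: "0 < s" using True by (simp add: s_def)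
    have ss: "s * s = 1 - c^2" using True by (simp add: s_def)
    define b where "b = (\<lambda>k. v k / s)"
    have "(\<Sum>k<m. b k * b k) = (\<Sum>k<m. v k * v k) / (s * s)"
      by (simp add: b_def sum_divide_distrib)
    then have 1: "(\<Sum>k<m. b k * b k) = 1" using vv ss s0 True by simp
    have 2: "(\<Sum>k<m. a k * b k) = 0" using av by (simp add: b_def sum_divide_distrib[symmetric])
    have "\<forall>i<m. b' i = cos phi * a i + sin phi * b i"
      using s0 by (simp add: cphi sphi s_def[symmetric] b_def v_def)
    then show ?thesis using aa 1 2 by (auto simp: onb_def)
  next
    case False
    have "c^2 \<le> 1" using \<open>\<bar>c\<bar> \<le> 1\<close> by (simp add: abs_square_le_1)
    then have c2: "c^2 = 1" using False by linarith
    then have "(\<Sum>k<m. v k * v k) = 0" using vv by simp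
    then have v0: "\<forall>k<m. v k * v k = 0"
      using sum_nonneg_eq_0_iff[of "{..<m}" "\<lambda>k. v k * v k"] by simp
    obtain b where b: "onb m a b" using exists_perp[OF m aa] by blast
    have "\<forall>i<m. b' i = cos phi * a i + sin phi * b i"
      using v0 c2 by (simp add: cphi sphi v_def)
    then show ?thesis using b by blast
  qed
qed




lemma ext_norm:
  assumes m: "1 \<le> m" and w: "w extreme_point_of omegaL N m"
  shows "w \<in> omegaL N m \<and> (\<Sum>i<m. (w (2^N + i))^2) = 1"
proof -
  have wO: "w \<in> omegaL N m" using w by (simp add: extreme_point_of_def)
  note wD = omegaL_D[OF wO]
  define s where "s = (\<Sum>i<m. (w (2^N + i))^2)"
  have s1: "s \<le> 1" using wD(3) by (simp add: s_def)
  have "s = 1"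
  proof (rule ccontr)
    assume "s \<noteq> 1"
    then have s1': "s < 1" using s1 by simp
    define eps where "eps = (1 - s) / 4"
    have e0: "0 < eps" using s1' by (simp add: eps_def)
    define e where "e = (\<lambda>i::nat. if i = 2^N then (1::real) else 0)"
    have w2: "\<bar>w (2^N)\<bar> \<le> 1"
    proof -
      have "(w (2^N + 0))^2 \<le> s" unfolding s_def
        by (rule member_le_sum) (use m in auto)
      then have "(w (2^N))^2 \<le> 1" using s1 by simp
      then show ?thesis by (simp add: abs_square_le_1)
    qed
    have inO: "w + c *\<^sub>R e \<in> omegaL N m" if c: "\<bar>c\<bar> \<le> eps" for c
    proof -
      have sq: "(\<Sum>i<m. ((w + c *\<^sub>R e) (2^N + i))^2) = s + (2 * c * w (2^N) + c * c)"
      proof -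
        have "(\<Sum>i<m. ((w + c *\<^sub>R e) (2^N + i))^2)
            = (\<Sum>i<m. (w (2^N + i))^2 + (if i = 0 then 2 * c * w (2^N) + c * c else 0))"
          by (rule sum.cong) (auto simp: e_def plus_fun_def power2_eq_square algebra_simps)
        also have "\<dots> = s + (2 * c * w (2^N) + c * c)"
          using m by (simp add: sum.distrib s_def sum.delta)
        finally show ?thesis .
      qed
      have "2 * c * w (2^N) \<le> 2 * eps"
      proof -
        have "\<bar>c * w (2^N)\<bar> \<le> eps * 1" unfolding abs_mult
          by (rule mult_mono) (use c w2 e0 in auto)
        then show ?thesis by (simp add: abs_le_iff)
      qed
      moreover have "c * c \<le> eps * eps"
      proof -
        have "\<bar>c\<bar> * \<bar>c\<bar> \<le> eps * eps" by (rule mult_mono) (use c e0 in auto)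
        then show ?thesis by simp
      qed
      moreover have "eps * eps \<le> eps"
      proof -
        have "0 \<le> s" unfolding s_def by (simp add: sum_nonneg)
        then have "eps \<le> 1" unfolding eps_def by simp
        then have "eps * eps \<le> eps * 1" by (rule mult_left_mono) (use e0 in simp)
        then show ?thesis by simp
      qed
      moreover have "3 * eps \<le> 1 - s" unfolding eps_def using s1' by simp
      ultimately have "s + (2 * c * w (2^N) + c * c) \<le> 1" by linarith
      then show ?thesis using wD sq m unfolding omegaL_def supp_vec_def midz_def
        by (auto simp: e_def plus_fun_def dimD_def)
    qed
    have p: "w + eps *\<^sub>R e \<in> omegaL N m" using inO e0 by simp
    have q: "w + (- eps) *\<^sub>R e \<in> omegaL N m" using inO[of "- eps"] e0 by simp
    have mid: "midpoint (w + eps *\<^sub>R e) (w + (- eps) *\<^sub>R e) = w"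
      by (auto simp: midpoint_def plus_fun_def scaleR_fun_def algebra_simps intro!: ext)
    have ne: "w + eps *\<^sub>R e \<noteq> w + (- eps) *\<^sub>R e"
    proof
      assume "w + eps *\<^sub>R e = w + (- eps) *\<^sub>R e"
      then have "(w + eps *\<^sub>R e) (2^N) = (w + (- eps) *\<^sub>R e) (2^N)" by (rule fun_cong)
      then show False using e0 by (simp add: e_def plus_fun_def)
    qed
    have "w \<in> open_segment (w + eps *\<^sub>R e) (w + (- eps) *\<^sub>R e)"
    proof -
      have "midpoint (w + eps *\<^sub>R e) (w + (- eps) *\<^sub>R e) \<in> open_segment (w + eps *\<^sub>R e) (w + (- eps) *\<^sub>R e)"
        using midpoint_in_open_segment ne by blast
      then show ?thesis unfolding mid .
    qed
    then show False using w p q by (simp add: extreme_point_of_def)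
  qed
  then show ?thesis using wO by (simp add: s_def)
qed

lemma path_part:
  assumes m: "2 \<le> m" and w: "w extreme_point_of omegaL N m" and w': "w' extreme_point_of omegaL N m"
  shows "\<exists>g :: real \<Rightarrow> nat \<Rightarrow> nat \<Rightarrow> real.
            (\<forall>t\<in>{0..1}. g t \<in> SOm m) \<and> (\<forall>i j. continuous_on {0..1} (\<lambda>t. g t i j))
            \<and> g 0 = idm m \<and> mvec (dimD N m) (TR N m 0 (g 1)) w = w'"
proof -
  have m1: "1 \<le> m" using m by simp
  note W = ext_norm[OF m1 w] and W' = ext_norm[OF m1 w']
  define a where "a = (\<lambda>i. w (2^N + i))"
  define b' where "b' = (\<lambda>i. w' (2^N + i))"
  have aa: "(\<Sum>k<m. a k * a k) = 1" using W by (simp add: a_def power2_eq_square)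
  have bb: "(\<Sum>k<m. b' k * b' k) = 1" using W' by (simp add: b'_def power2_eq_square)
  obtain b phi where onb: "onb m a b" and dec: "\<forall>i<m. b' i = cos phi * a i + sin phi * b i"
    using unit_decomp[OF m aa bb] by blast
  define g where "g = (\<lambda>t. rot m a b (t * phi))"
  have "\<forall>t\<in>{0..1}. g t \<in> SOm m" unfolding g_def using onb.rot_SOm[OF onb] by blast
  moreover have "\<forall>i j. continuous_on {0..1} (\<lambda>t. g t i j)" unfolding g_def using onb.rot_cont[OF onb] by blast
  moreover have "g 0 = idm m" unfolding g_def using onb.rot_0[OF onb] by simp
  moreover have "mvec (dimD N m) (TR N m 0 (g 1)) w = w'"
  proof (rule ext)
    fix i
    note wD = omegaL_D[OF conjunct1[OF W]] and wD' = omegaL_D[OF conjunct1[OF W']]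
    show "mvec (dimD N m) (TR N m 0 (g 1)) w i = w' i"
    proof (cases "i < 2^N")
      case True
      then show ?thesis using wD wD' by (cases "i = 0") (auto simp: mvec_TR_low midz_def)
    next
      case False
      show ?thesis
      proof (cases "i < dimD N m")
        case True
        then obtain j where j: "i = 2^N + j" "j < m" using False unfolding dimD_def
          by (metis add_less_cancel_left le_Suc_ex not_less)
        have "mvec (dimD N m) (TR N m 0 (g 1)) w i = (\<Sum>l<m. rot m a b phi j l * a l)"
          unfolding j by (simp add: mvec_TR_block j g_def a_def)
        also have "\<dots> = b' j" using onb.rot_a[OF onb j(2)] dec j by simp
        finally show ?thesis by (simp add: b'_def j)
      next
        case False
        then show ?thesis using wD' by (simp add: mvec_out midz_def)
      qed
    qed
  qed
  ultimately show ?thesis by blast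
qed




lemma sum_vec_apply: "finite A \<Longrightarrow> (\<Sum>y\<in>A. (F y :: nat \<Rightarrow> real)) i = (\<Sum>y\<in>A. F y i)"
  by (induction A rule: finite_induct) auto

lemma vdot_sum: fixes l :: nat and e :: "nat \<Rightarrow> nat \<Rightarrow> real" shows "vdot D (\<Sum>y<l. e y) w = (\<Sum>y<l. vdot D (e y) w)"
proof -
  have "(\<Sum>y<l. e y) i = (\<Sum>y<l. e y i)" for i by (rule sum_vec_apply) simp
  then show ?thesis unfolding vdot_def by (simp add: sum_distrib_right sum.swap[of _ "{..<D}"])
qed

lemma mi_bound:
  fixes N m k l :: nat and p :: "nat \<Rightarrow> real"
  assumes p0: "\<forall>x<k. 0 \<le> p x" and p1: "(\<Sum>x<k. p x) = 1"
    and om: "\<forall>x<k. omega x \<in> omegaL N m" and ee: "\<forall>y<l. e y \<in> Eloc N m"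
    and es: "(\<Sum>y<l. e y) = unitE"
  shows "mutual_info k l p (\<lambda>x y. vdot (dimD N m) (e y) (omega x)) \<le> 1"
proof -
  define W where "W = (\<lambda>x y. vdot (dimD N m) (e y) (omega x))"
  define a where "a = (\<lambda>y. e y 0)"
  define q where "q = (\<lambda>y. \<Sum>x<k. p x * W x y)"
  have W0: "0 \<le> W x y" and W2: "W x y \<le> 2 * a y" if "x < k" "y < l" for x y
    using Eloc_props[of "e y" N m] ee om that by (auto simp: W_def a_def)
  have a0: "0 \<le> a y" if "y < l" for y using Eloc_props[of "e y" N m] ee that by (auto simp: a_def)
  have Wsum: "(\<Sum>y<l. W x y) = 1" if "x < k" for x
    unfolding W_def vdot_sum[symmetric] es using vdot_unitE om that by blast
  have asum: "(\<Sum>y<l. a y) = 1"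
    unfolding a_def using fun_cong[OF es, of 0] by (simp add: sum_vec_apply unitE_def)
  have qsum: "(\<Sum>y<l. q y) = 1"
  proof -
    have "(\<Sum>y<l. q y) = (\<Sum>x<k. p x * (\<Sum>y<l. W x y))"
      unfolding q_def by (simp add: sum_distrib_left sum.swap[of _ "{..<l}"])
    also have "\<dots> = (\<Sum>x<k. p x)" by (rule sum.cong) (auto simp: Wsum)
    finally show ?thesis using p1 by simp
  qed
  have q0: "0 \<le> q y" if "y < l" for y unfolding q_def using p0 W0 that by (auto intro!: sum_nonneg)
  have qa: "q y \<le> 2 * a y" if y: "y < l" for y
  proof -
    have "q y \<le> (\<Sum>x<k. p x * (2 * a y))" unfolding q_def
      by (rule sum_mono) (use p0 W2 y in \<open>auto intro: mult_left_mono\<close>)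
    also have "\<dots> = 2 * a y" using p1 by (simp add: sum_distrib_right[symmetric])
    finally show ?thesis .
  qed
  define B where "B = (\<lambda>y. if q y = 0 then 0 else q y + q y * log 2 (a y / q y))"
  have termb: "(\<Sum>x<k. p x * W x y * log 2 (W x y / q y)) \<le> B y" if y: "y < l" for y
  proof (cases "q y = 0")
    case True
    have "\<forall>x\<in>{..<k}. p x * W x y = 0"
      using True sum_nonneg_eq_0_iff[of "{..<k}" "\<lambda>x. p x * W x y"] p0 W0 y unfolding q_def by auto
    then have "(\<Sum>x<k. p x * W x y * log 2 (W x y / q y)) = 0" by (intro sum.neutral) simp
    then show ?thesis using True by (simp add: B_def)
  next
    case False
    then have qp: "0 < q y" using q0[OF y] by (simp add: less_le)
    have ap: "0 < a y" using qa[OF y] qp by simp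
    have "p x * W x y * log 2 (W x y / q y) \<le> p x * W x y * (1 + log 2 (a y / q y))" if x: "x < k" for x
    proof (cases "p x * W x y = 0")
      case True then show ?thesis by auto
    next
      case False
      then have Wp: "0 < W x y" using W0[OF x y] by (cases "W x y = 0") auto
      have pp: "0 < p x * W x y" using False p0 x W0[OF x y] by (simp add: less_le)
      have "log 2 (W x y / q y) = log 2 (W x y / a y) + log 2 (a y / q y)"
        using Wp ap qp by (simp add: log_divide)
      moreover have "log 2 (W x y / a y) \<le> 1"
      proof -
        have "W x y / a y \<le> 2" using W2[OF x y] ap by (simp add: divide_le_eq)
        then have "log 2 (W x y / a y) \<le> log 2 2" using Wp ap by (subst log_le_cancel_iff) auto
        then show ?thesis by simp
      qed
      ultimately show ?thesis using pp by (simp add: mult_left_mono)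
    qed
    then have "(\<Sum>x<k. p x * W x y * log 2 (W x y / q y)) \<le> (\<Sum>x<k. p x * W x y * (1 + log 2 (a y / q y)))"
      by (intro sum_mono) auto
    also have "\<dots> = q y * (1 + log 2 (a y / q y))" unfolding q_def by (simp add: sum_distrib_right)
    finally show ?thesis using False by (simp add: B_def algebra_simps)
  qed
  have Bb: "B y \<le> q y + (a y - q y) / ln 2" if y: "y < l" for y
  proof (cases "q y = 0")
    case True then show ?thesis using a0[OF y] by (simp add: B_def)
  next
    case False
    then have qp: "0 < q y" using q0[OF y] by (simp add: less_le)
    have ap: "0 < a y" using qa[OF y] qp by simp
    have "ln (a y / q y) \<le> a y / q y - 1" using ap qp by (intro ln_le_minus_one) simp
    then have "q y * ln (a y / q y) \<le> q y * (a y / q y - 1)" using qp by (simp add: mult_left_mono)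
    also have "\<dots> = a y - q y" using qp by (simp add: field_simps)
    finally have "q y * ln (a y / q y) / ln 2 \<le> (a y - q y) / ln 2" by (simp add: divide_right_mono)
    then show ?thesis using False by (simp add: B_def log_def)
  qed
  have "mutual_info k l p W = (\<Sum>y<l. \<Sum>x<k. p x * W x y * log 2 (W x y / q y))"
    unfolding mutual_info_def q_def by (rule sum.swap)
  also have "\<dots> \<le> (\<Sum>y<l. B y)" by (rule sum_mono) (simp add: termb)
  also have "\<dots> \<le> (\<Sum>y<l. q y + (a y - q y) / ln 2)" by (rule sum_mono) (simp add: Bb)
  also have "\<dots> = 1" using qsum asum
    by (simp add: sum.distrib sum_divide_distrib[symmetric] sum_subtractf)
  finally show ?thesis unfolding W_def .
qed




lemma capacity_eq:
  assumes m: "1 \<le> m"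
  shows "capacity (omegaL N m) (Eloc N m) unitE (vdot (dimD N m)) = 1"
proof -
  define om where "om = (\<lambda>x::nat. \<lambda>i::nat. if i = 0 then (1::real) else if i = 2^N then (if x = 0 then 1 else -1) else 0)"
  define rr where "rr = (\<lambda>y::nat. \<lambda>i::nat. if i = 0 then (if y = 0 then 1 else -1) else (0::real))"
  define ef where "ef = (\<lambda>y. halfvec N m (rr y))"
  have omL: "om x \<in> omegaL N m" for x
  proof -
    have "(\<Sum>i<m. (om x (2^N + i))^2) = (\<Sum>i<m. if i = 0 then 1 else 0)"
      by (rule sum.cong) (auto simp: om_def)
    also have "\<dots> = 1" using m by (simp add: sum.delta)
    finally show ?thesis unfolding omegaL_def supp_vec_def using m
      by (auto simp: om_def dimD_def)
  qed
  have rr1: "(\<Sum>i<m. (rr y i)^2) = 1" for y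
  proof -
    have "(\<Sum>i<m. (rr y i)^2) = (\<Sum>i<m. if i = 0 then 1 else 0)"
      by (rule sum.cong) (auto simp: rr_def)
    also have "\<dots> = 1" using m by (simp add: sum.delta)
    finally show ?thesis .
  qed
  have efE: "ef y \<in> Eloc N m" for y
    unfolding ef_def Eloc_def by (rule hull_inc) (use rr1 in blast)
  have efs: "(\<Sum>y<2. ef y) = unitE"
  proof (rule ext)
    fix i
    have "(\<Sum>y<2. ef y) i = (\<Sum>y<(2::nat). ef y i)" by (rule sum_vec_apply) simp
    also have "\<dots> = ef 0 i + ef 1 i" by (simp add: numeral_2_eq_2)
    also have "\<dots> = unitE i" by (auto simp: ef_def halfvec_def rr_def unitE_def)
    finally show "(\<Sum>y<2. ef y) i = unitE i" .
  qed
  have Wd: "vdot (dimD N m) (ef y) (om x) = (if y = x then 1 else 0)" if "x < 2" "y < 2" for x y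
  proof -
    have "(\<Sum>j<m. rr y j * om x (2^N + j)) = (\<Sum>j<m. if j = 0 then rr y 0 * om x (2^N) else 0)"
      by (rule sum.cong) (auto simp: rr_def)
    also have "\<dots> = rr y 0 * om x (2^N)" using m by (simp add: sum.delta)
    finally have "vdot (dimD N m) (ef y) (om x) = 1/2 + rr y 0 * om x (2^N) / 2"
      unfolding ef_def using vdot_halfvec[OF omL] by simp
    then show ?thesis using that by (auto simp: rr_def om_def less_2_cases_iff)
  qed
  have mi1: "mutual_info 2 2 (\<lambda>x. 1/2) (\<lambda>x y. vdot (dimD N m) (ef y) (om x)) = 1"
    using mi_N[of 1 "\<lambda>x y. vdot (dimD N m) (ef y) (om x)"] Wd by simp
  let ?S = "{mutual_info k l p (\<lambda>x y. vdot (dimD N m) (e y) (omega x)) | k l p omega e.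
       0 < k \<and> (\<forall>x<k. 0 \<le> p x) \<and> (\<Sum>x<k. p x) = 1 \<and> (\<forall>x<k. omega x \<in> omegaL N m)
       \<and> (\<forall>y<l. e y \<in> Eloc N m) \<and> (\<Sum>y<l. e y) = unitE}"
  have one: "1 \<in> ?S"
  proof -
    have "(\<Sum>x<(2::nat). (1::real)/2) = 1" by simp
    then show ?thesis using mi1 omL efE efs
      by (intro CollectI exI[of _ 2] exI[of _ "2::nat"] exI[of _ "\<lambda>x::nat. (1::real)/2"] exI[of _ om] exI[of _ ef]) auto
  qed
  have bd: "\<forall>z\<in>?S. z \<le> 1" using mi_bound by blast
  show ?thesis unfolding capacity_def by (rule cSup_eq_maximum[OF one]) (use bd in blast)
qed

theorem mainTheorem14:
  fixes N m :: nat
  assumes "2 \<le> N" and "1 \<le> m"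
  defines "D \<equiv> dimD N m"
  shows
    \<comment> \<open>(a)\<close>
    "Lam N m = {Phi N mu | mu. mu < 2^N}
     \<and> tmin N m \<subseteq> OmegaAB N m \<and> OmegaAB N m \<subseteq> tmax N m
     \<comment> \<open>(b)\<close>
     \<and> (\<forall>T\<in>Tset N m. (\<forall>v\<in>omegaL N m. mvec D T v \<in> omegaL N m)
          \<and> (\<forall>phi\<in>OmegaAB N m. mmul D T phi \<in> OmegaAB N m \<and> mmul D phi (mtrans T) \<in> OmegaAB N m))
     \<and> (2 \<le> m \<longrightarrow> (\<forall>w\<in>{w. w extreme_point_of omegaL N m}. \<forall>w'\<in>{w. w extreme_point_of omegaL N m}.
          \<exists>g :: real \<Rightarrow> nat \<Rightarrow> nat \<Rightarrow> real.
            (\<forall>t\<in>{0..1}. g t \<in> SOm m) \<and> (\<forall>i j. continuous_on {0..1} (\<lambda>t. g t i j))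
            \<and> g 0 = idm m \<and> mvec D (TR N m 0 (g 1)) w = w'))
     \<comment> \<open>(c)\<close>
     \<and> (\<forall>e\<in>Eloc N m. \<forall>f\<in>Eloc N m. \<forall>mu<2^N. \<forall>nu<2^N.
          mdot D (tens e f) (Phi N mu) = mdot D (tens e f) (Phi N nu))
     \<and> (\<forall>mu<2^N. \<forall>nu<2^N. mu \<noteq> nu \<longrightarrow> Phi N mu \<noteq> Phi N nu)
     \<comment> \<open>(d)\<close>
     \<and> (\<forall>y<2^N. Fy N y \<in> EAB N m)
     \<and> (\<Sum>y<2^N. Fy N y) = tens unitE unitE
     \<and> (\<forall>R\<in>SOm m. \<forall>x<2^N. \<forall>y<2^N.
          mdot D (Fy N y) (mmul D (TR N m x R) (Phi N 0)) = mdot D (Fy N y) (Phi N x)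
          \<and> mdot D (Fy N y) (Phi N x) = (if y = x then 1 else 0))
     \<and> (\<forall>R\<in>SOm m. (\<forall>x<2^N. mmul D (TR N m x R) (Phi N 0) \<in> OmegaAB N m)
          \<and> mutual_info (2^N) (2^N) (\<lambda>x. 1 / 2^N)
              (\<lambda>x y. mdot D (Fy N y) (mmul D (TR N m x R) (Phi N 0))) = real N)
     \<and> capacity (omegaL N m) (Eloc N m) unitE (vdot D) = 1"
proof -
  have TP: "mmul (dimD N m) (TR N m x R) (Phi N 0) = Phi N x" if "x < 2^N" for x R
    using TR_Phi[OF that, of 0 m R] that by simp
  have a1: "Lam N m = {Phi N mu | mu. mu < 2^N}" by (rule Lam_eq[OF idm_SOm])
  have a2: "tmin N m \<subseteq> OmegaAB N m" by (rule tmin_OmegaAB)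
  have a3: "OmegaAB N m \<subseteq> tmax N m" by (rule OmegaAB_tmax)
  have b1: "\<forall>T\<in>Tset N m. (\<forall>v\<in>omegaL N m. mvec D T v \<in> omegaL N m)
          \<and> (\<forall>phi\<in>OmegaAB N m. mmul D T phi \<in> OmegaAB N m \<and> mmul D phi (mtrans T) \<in> OmegaAB N m)"
    unfolding D_def using part_b[OF idm_SOm] by blast
  have b2: "2 \<le> m \<longrightarrow> (\<forall>w\<in>{w. w extreme_point_of omegaL N m}. \<forall>w'\<in>{w. w extreme_point_of omegaL N m}.
          \<exists>g :: real \<Rightarrow> nat \<Rightarrow> nat \<Rightarrow> real.
            (\<forall>t\<in>{0..1}. g t \<in> SOm m) \<and> (\<forall>i j. continuous_on {0..1} (\<lambda>t. g t i j))
            \<and> g 0 = idm m \<and> mvec D (TR N m 0 (g 1)) w = w')"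
    unfolding D_def using path_part by blast
  have c1: "\<forall>e\<in>Eloc N m. \<forall>f\<in>Eloc N m. \<forall>mu<2^N. \<forall>nu<2^N.
          mdot D (tens e f) (Phi N mu) = mdot D (tens e f) (Phi N nu)"
    unfolding D_def using Eloc_props mdot_tens_Phi by metis
  have c2: "\<forall>mu<2^N. \<forall>nu<2^N. mu \<noteq> nu \<longrightarrow> Phi N mu \<noteq> Phi N nu"
  proof (intro allI impI)
    fix mu nu :: nat assume h: "mu < 2^N" "nu < 2^N" "mu \<noteq> nu"
    show "Phi N mu \<noteq> Phi N nu"
    proof
      assume e: "Phi N mu = Phi N nu"
      have "mdot (dimD N m) (Phi N mu) (Phi N mu) = 2^N" using h by (simp add: mdot_Phi_Phi)
      moreover have "mdot (dimD N m) (Phi N mu) (Phi N nu) = 0" using h by (simp add: mdot_Phi_Phi)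
      ultimately show False using e by simp
    qed
  qed
  have d1: "\<forall>y<2^N. Fy N y \<in> EAB N m" using Fy_EAB by blast
  have d2: "(\<Sum>y<2^N. Fy N y) = tens unitE unitE" by (rule sum_Fy)
  have d3: "\<forall>R\<in>SOm m. \<forall>x<2^N. \<forall>y<2^N.
          mdot D (Fy N y) (mmul D (TR N m x R) (Phi N 0)) = mdot D (Fy N y) (Phi N x)
          \<and> mdot D (Fy N y) (Phi N x) = (if y = x then 1 else 0)"
    using TP Fy_Phi unfolding D_def by simp
  have d4: "\<forall>R\<in>SOm m. (\<forall>x<2^N. mmul D (TR N m x R) (Phi N 0) \<in> OmegaAB N m)
          \<and> mutual_info (2^N) (2^N) (\<lambda>x. 1 / 2^N)
              (\<lambda>x y. mdot D (Fy N y) (mmul D (TR N m x R) (Phi N 0))) = real N"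
  proof (intro ballI conjI allI impI)
    fix R x assume "R \<in> SOm m" "x < (2::nat)^N"
    then show "mmul D (TR N m x R) (Phi N 0) \<in> OmegaAB N m" using TP Phi_OmegaAB[OF idm_SOm] unfolding D_def by simp
  next
    fix R assume "R \<in> SOm m"
    show "mutual_info (2^N) (2^N) (\<lambda>x. 1 / 2^N)
              (\<lambda>x y. mdot D (Fy N y) (mmul D (TR N m x R) (Phi N 0))) = real N"
      unfolding D_def by (rule mi_N) (simp add: TP Fy_Phi)
  qed
  have e1: "capacity (omegaL N m) (Eloc N m) unitE (vdot D) = 1"
    unfolding D_def by (rule capacity_eq[OF assms(2)])
  show ?thesis using a1 a2 a3 b1 b2 c1 c2 d1 d2 d3 d4 e1 by blast
qed


end
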